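(* Let $f\in C_b(\Omega\times\mathcal{R})$ and $t\in(0,1)$. Let $(\hat\pi_1,\phi_1)$ and $(\hat\pi_2,\phi_2)$ be pairs where each $\hat\pi_i$ is an environment kernel and $\phi_i$ is a probability density with respect to $\mathbb{P}$ such that $\phi_i\,\mathrm{d}\mathbb{P}$ is $\hat\pi_i$-invariant. Define $\gamma:=\frac{t\phi_1}{t\phi_1+(1-t)\phi_2}$, $\phi_3:=t\phi_1+(1-t)\phi_2$ and $\hat\pi_3:=\gamma\hat\pi_1+(1-\gamma)\hat\pi_2$. Then $\phi_3\,\mathrm{d}\mathbb{P}$ is $\hat\pi_3$-invariant and $H_f(\hat\pi_3,\phi_3)\ge tH_f(\hat\pi_1,\phi_1)+(1-t)H_f(\hat\pi_2,\phi_2)$.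
   Context: Let $d,B\ge1$, $\mathcal{R}:=\{z\in\mathbb{Z}^d:0<|z_1|+\cdots+|z_d|\le B\}$. An environment is $\omega=(\omega_x)_{x\in\mathbb{Z}^d}$ with $\omega_x=(\pi(x,x+z))_{z\in\mathcal{R}}$ a probability vector; $\Omega$ is the environment space, $(T_z\omega)_x=\omega_{x+z}$, $\mathbb{P}$ a probability on $\Omega$ stationary and ergodic under shifts. An environment kernel is a measurable $\hat\pi:\Omega\times\mathcal{R}\to[0,\infty)$ with $\sum_z\hat\pi(\cdot,z)=1$ $\mathbb{P}$-a.s. For a probability density $\phi$ w.r.t. $\mathbb{P}$, $\phi\,\mathrm{d}\mathbb{P}$ is $\hat\pi$-invariant if $\phi(\omega)=\sum_{z\in\mathcal{R}}\phi(T_{-z}\omega)\hat\pi(T_{-z}\omega,z)$ for $\mathbb{P}$-a.e. $\omega$. For $f\in C_b(\Omega\times\mathcal{R})$, $H_f(\hat\pi,\phi):=\int\sum_{z\in\mathcal{R}}\hat\pi(\omega,z)\left(f(\omega,z)-\log\frac{\hat\pi(\omega,z)}{\pi(0,z)}\right)\phi(\omega)\,\mathrm{d}\mathbb{P}(\omega)$. *)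

theory Defs
  imports "HOL-Probability.Probability"
begin

text \<open>Sites are elements of int^'d (d = CARD('d) >= 1).  An environment omega is
  encoded as a function with omega x z = pi(x, x+z) for z in the step set R.\<close>

type_synonym 'd env = "int ^ 'd \<Rightarrow> int ^ 'd \<Rightarrow> real"

definition steps :: "nat \<Rightarrow> (int ^ 'd::finite) set" where
  "steps B = {z. 0 < (\<Sum>i\<in>UNIV. \<bar>z $ i\<bar>) \<and> (\<Sum>i\<in>UNIV. \<bar>z $ i\<bar>) \<le> int B}"

definition env_space :: "nat \<Rightarrow> ('d::finite) env set" where
  "env_space B = {\<omega>. \<forall>x. (\<forall>z. z \<notin> steps B \<longrightarrow> \<omega> x z = 0)
       \<and> (\<forall>z\<in>steps B. 0 \<le> \<omega> x z) \<and> (\<Sum>z\<in>steps B. \<omega> x z) = 1}"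

definition shift :: "int ^ 'd \<Rightarrow> ('d::finite) env \<Rightarrow> 'd env" where
  "shift z \<omega> = (\<lambda>x. \<omega> (x + z))"

definition standing_env :: "nat \<Rightarrow> ('d::finite) env measure \<Rightarrow> bool" where
  "standing_env B P \<longleftrightarrow> prob_space P \<and> space P = env_space B
     \<and> sets P = sets (restrict_space borel (env_space B))
     \<and> (\<forall>z. shift z \<in> P \<rightarrow>\<^sub>M P \<and> distr P P (shift z) = P)
     \<and> (\<forall>A\<in>sets P. (\<forall>z. shift z -` A \<inter> space P = A)
            \<longrightarrow> measure P A = 0 \<or> measure P A = 1)"

text \<open>f in C_b(Omega x R).  Since R is finite and discrete, continuity on Omega x R
  means continuity of each slice f(.,z) on Omega.\<close>
definition Cb :: "nat \<Rightarrow> (('d::finite) env \<Rightarrow> int ^ 'd \<Rightarrow> real) \<Rightarrow> bool" where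
  "Cb B f \<longleftrightarrow> (\<forall>z\<in>steps B. continuous_on (env_space B) (\<lambda>\<omega>. f \<omega> z))
     \<and> (\<exists>C. \<forall>\<omega>\<in>env_space B. \<forall>z\<in>steps B. \<bar>f \<omega> z\<bar> \<le> C)"

definition env_kernel :: "nat \<Rightarrow> ('d::finite) env measure \<Rightarrow> ('d env \<Rightarrow> int ^ 'd \<Rightarrow> real) \<Rightarrow> bool" where
  "env_kernel B P k \<longleftrightarrow> (\<forall>z\<in>steps B. (\<lambda>\<omega>. k \<omega> z) \<in> borel_measurable P)
     \<and> (\<forall>\<omega>\<in>space P. \<forall>z\<in>steps B. 0 \<le> k \<omega> z)
     \<and> (AE \<omega> in P. (\<Sum>z\<in>steps B. k \<omega> z) = 1)"

definition prob_density :: "'a measure \<Rightarrow> ('a \<Rightarrow> real) \<Rightarrow> bool" where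
  "prob_density P \<phi> \<longleftrightarrow> \<phi> \<in> borel_measurable P \<and> (\<forall>\<omega>\<in>space P. 0 \<le> \<phi> \<omega>)
     \<and> integrable P \<phi> \<and> (\<integral>\<omega>. \<phi> \<omega> \<partial>P) = 1"

definition kernel_invariant :: "nat \<Rightarrow> ('d::finite) env measure \<Rightarrow> ('d env \<Rightarrow> int ^ 'd \<Rightarrow> real)
     \<Rightarrow> ('d env \<Rightarrow> real) \<Rightarrow> bool" where
  "kernel_invariant B P k \<phi> \<longleftrightarrow>
     (AE \<omega> in P. \<phi> \<omega> = (\<Sum>z\<in>steps B. \<phi> (shift (- z) \<omega>) * k (shift (- z) \<omega>) z))"

text \<open>Pointwise summand k(omega,z) (f(omega,z) - log (k(omega,z)/pi(0,z))), extended-real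
  valued, with the conventions 0 log 0 = 0 and a log (a/0) = +infinity for a > 0.\<close>
definition H_term :: "('d::finite) env \<Rightarrow> int ^ 'd \<Rightarrow> ('d env \<Rightarrow> int ^ 'd \<Rightarrow> real)
     \<Rightarrow> ('d env \<Rightarrow> int ^ 'd \<Rightarrow> real) \<Rightarrow> ereal" where
  "H_term \<omega> z f k =
     (if k \<omega> z = 0 then 0
      else if \<omega> 0 z = 0 then - \<infinity>
      else ereal (k \<omega> z * (f \<omega> z - ln (k \<omega> z / \<omega> 0 z))))"

definition H_integrand :: "nat \<Rightarrow> ('d::finite) env \<Rightarrow> ('d env \<Rightarrow> int ^ 'd \<Rightarrow> real)
     \<Rightarrow> ('d env \<Rightarrow> int ^ 'd \<Rightarrow> real) \<Rightarrow> ('d env \<Rightarrow> real) \<Rightarrow> ereal" where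
  "H_integrand B \<omega> f k \<phi> = (\<Sum>z\<in>steps B. H_term \<omega> z f k) * ereal (\<phi> \<omega>)"

definition H_f :: "nat \<Rightarrow> ('d::finite) env measure \<Rightarrow> ('d env \<Rightarrow> int ^ 'd \<Rightarrow> real)
     \<Rightarrow> ('d env \<Rightarrow> int ^ 'd \<Rightarrow> real) \<Rightarrow> ('d env \<Rightarrow> real) \<Rightarrow> ereal" where
  "H_f B P f k \<phi> =
     enn2ereal (\<integral>\<^sup>+ \<omega>. e2ennreal (H_integrand B \<omega> f k \<phi>) \<partial>P)
     - enn2ereal (\<integral>\<^sup>+ \<omega>. e2ennreal (- H_integrand B \<omega> f k \<phi>) \<partial>P)"

end

theory Submission imports Defs begin

lemma logsum_half:
  fixes u p r :: real
  assumes "u \<ge> 0" "p \<ge> 0" "r > 0"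
  shows "(if p = 0 then 0 else u * p * (ln r - ln p)) \<le> u * r - u * p"
proof (cases "p = 0")
  case True then show ?thesis using assms by simp
next
  case False
  then have pp: "p > 0" using assms by simp
  have "ln (r / p) \<le> r / p - 1" using pp assms by (intro ln_le_minus_one) simp
  then have "ln r - ln p \<le> r / p - 1" using pp assms by (simp add: ln_div)
  then have "u * p * (ln r - ln p) \<le> u * p * (r / p - 1)"
    using assms pp by (intro mult_left_mono) auto
  also have "\<dots> = u * r - u * p" using pp by (simp add: field_simps)
  finally show ?thesis using False by simp
qed

lemma logsum:
  fixes u1 u2 p q pi F r :: real
  assumes "u1 \<ge> 0" "u2 \<ge> 0" "p \<ge> 0" "q \<ge> 0" "pi > 0" "u1 + u2 > 0"
  and r_def: "r = (u1 * p + u2 * q) / (u1 + u2)"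
  shows "u1 * (if p = 0 then 0 else p * (F - ln (p / pi)))
       + u2 * (if q = 0 then 0 else q * (F - ln (q / pi)))
       \<le> (u1 + u2) * (if r = 0 then 0 else r * (F - ln (r / pi)))"
proof -
  have r0: "r \<ge> 0" unfolding r_def using assms(1-4,6) by simp
  have m3: "(u1 + u2) * r = u1 * p + u2 * q" unfolding r_def using assms(6) by simp
  show ?thesis
  proof (cases "r = 0")
    case True
    then have "u1 * p = 0" "u2 * q = 0" using m3 assms
      by (metis mult_nonneg_nonneg add_nonneg_eq_0_iff mult_eq_0_iff)+
    then show ?thesis using True by auto
  next
    case False
    then have rp: "r > 0" using r0 by simp
    have d1: "(if p = 0 then 0 else u1 * p * (ln r - ln p)) \<le> u1 * r - u1 * p"
      using logsum_half[OF assms(1,3) rp] .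
    have d2: "(if q = 0 then 0 else u2 * q * (ln r - ln q)) \<le> u2 * r - u2 * q"
      using logsum_half[OF assms(2,4) rp] .
    have e1: "u1 * (if p = 0 then 0 else p * (F - ln (p / pi)))
       = u1 * p * (F - ln r + ln pi) + (if p = 0 then 0 else u1 * p * (ln r - ln p))"
      using assms(1-6) by (cases "p = 0") (auto simp: ln_div algebra_simps)
    have e2: "u2 * (if q = 0 then 0 else q * (F - ln (q / pi)))
       = u2 * q * (F - ln r + ln pi) + (if q = 0 then 0 else u2 * q * (ln r - ln q))"
      using assms(1-6) by (cases "q = 0") (auto simp: ln_div algebra_simps)
    have e3: "(u1 + u2) * (if r = 0 then 0 else r * (F - ln (r / pi)))
       = (u1 * p + u2 * q) * (F - ln r + ln pi)"
    proof -
      have "(u1 + u2) * (r * (F - ln (r / pi))) = ((u1 + u2) * r) * (F - ln r + ln pi)"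
        using rp assms(5) by (simp add: ln_div algebra_simps)
      then show ?thesis using False m3 by simp
    qed
    show ?thesis unfolding e1 e2 e3 using d1 d2 m3 by (simp add: algebra_simps)
  qed
qed

definition Ht :: "real \<Rightarrow> real \<Rightarrow> real \<Rightarrow> ereal" where
  "Ht k p F = (if k = 0 then 0 else if p = 0 then - \<infinity> else ereal (k * (F - ln (k / p))))"

definition Rt :: "real \<Rightarrow> real \<Rightarrow> real \<Rightarrow> real" where
  "Rt k p F = (if k = 0 then 0 else k * (F - ln (k / p)))"

lemma Ht_not_inf: "Ht k p F \<noteq> \<infinity>" by (simp add: Ht_def)

lemma minf_add1: "(x::ereal) = - \<infinity> \<Longrightarrow> y \<noteq> \<infinity> \<Longrightarrow> x + y = - \<infinity>"
  by (cases y) auto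
lemma minf_add2: "(y::ereal) = - \<infinity> \<Longrightarrow> x \<noteq> \<infinity> \<Longrightarrow> x + y = - \<infinity>"
  by (cases x) auto

lemma sum_minf:
  fixes x :: "'a \<Rightarrow> ereal"
  assumes "finite S" "z0 \<in> S" "x z0 = - \<infinity>" "\<forall>z\<in>S. x z \<noteq> \<infinity>"
  shows "(\<Sum>z\<in>S. x z) = - \<infinity>"
proof -
  have "(\<Sum>z\<in>S. x z) = x z0 + (\<Sum>z\<in>S - {z0}. x z)"
    using assms by (simp add: sum.remove)
  moreover have "(\<Sum>z\<in>S - {z0}. x z) \<noteq> \<infinity>" using assms by (simp add: sum_Pinfty)
  ultimately show ?thesis using assms(3) by simp
qed

lemma sum_Ht_real:
  assumes "\<forall>z\<in>S. p z = 0 \<longrightarrow> k z = 0"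
  shows "(\<Sum>z\<in>S. Ht (k z) (p z) (F z)) = ereal (\<Sum>z\<in>S. Rt (k z) (p z) (F z))"
proof -
  have "(\<Sum>z\<in>S. Ht (k z) (p z) (F z)) = (\<Sum>z\<in>S. ereal (Rt (k z) (p z) (F z)))"
    using assms by (intro sum.cong) (auto simp: Ht_def Rt_def)
  then show ?thesis by simp
qed

lemma pointwise:
  fixes S :: "'z set" and p q pi F :: "'z \<Rightarrow> real" and a b t :: real
  assumes fin: "finite S" and t: "0 < t" "t < 1" and ab: "a \<ge> 0" "b \<ge> 0"
    and nn: "\<forall>z\<in>S. p z \<ge> 0 \<and> q z \<ge> 0 \<and> pi z \<ge> 0"
  shows "ereal t * ((\<Sum>z\<in>S. Ht (p z) (pi z) (F z)) * ereal a)
       + ereal (1 - t) * ((\<Sum>z\<in>S. Ht (q z) (pi z) (F z)) * ereal b)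
     \<le> (\<Sum>z\<in>S. Ht ((t * a / (t * a + (1 - t) * b)) * p z
                      + (1 - t * a / (t * a + (1 - t) * b)) * q z) (pi z) (F z))
        * ereal (t * a + (1 - t) * b)"
    (is "?L \<le> ?R")
proof -
  define s where "s = t * a + (1 - t) * b"
  have s0: "s \<ge> 0" unfolding s_def using t ab by simp
  have fin2: "\<forall>z\<in>S. Ht (q z) (pi z) (F z) \<noteq> \<infinity>" "\<forall>z\<in>S. Ht (p z) (pi z) (F z) \<noteq> \<infinity>"
    by (auto simp: Ht_not_inf)
  show ?thesis
  proof (cases "s = 0")
    case True
    have "t * a \<ge> 0" "(1 - t) * b \<ge> 0" using t ab by auto
    then have "t * a = 0" "(1 - t) * b = 0" using True unfolding s_def by linarith+
    then have "a = 0" "b = 0" using t by auto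
    then show ?thesis by (simp add: zero_ereal_def[symmetric])
  next
    case False
    then have sp: "s > 0" using s0 by simp
    show ?thesis
    proof (cases "\<exists>z\<in>S. a > 0 \<and> p z > 0 \<and> pi z = 0")
      case True
      then obtain z0 where z0: "z0 \<in> S" "a > 0" "p z0 > 0" "pi z0 = 0" by blast
      have "(\<Sum>z\<in>S. Ht (p z) (pi z) (F z)) = - \<infinity>"
        using sum_minf[OF fin z0(1)] z0 fin2 by (simp add: Ht_def)
      then have "ereal t * ((\<Sum>z\<in>S. Ht (p z) (pi z) (F z)) * ereal a) = - \<infinity>"
        using z0 t by simp
      moreover have "ereal (1 - t) * ((\<Sum>z\<in>S. Ht (q z) (pi z) (F z)) * ereal b) \<noteq> \<infinity>"
        using t ab fin2 sum_Pinfty[of "\<lambda>z. Ht (q z) (pi z) (F z)" S]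
        by (cases "(\<Sum>z\<in>S. Ht (q z) (pi z) (F z))") (auto simp: ereal_mult_eq_PInfty)
      ultimately have Lm: "?L = - \<infinity>" by (rule minf_add1)
      show ?thesis unfolding Lm by (rule ereal_less_eq(2))
    next
      case no1: False
      show ?thesis
      proof (cases "\<exists>z\<in>S. b > 0 \<and> q z > 0 \<and> pi z = 0")
        case True
        then obtain z0 where z0: "z0 \<in> S" "b > 0" "q z0 > 0" "pi z0 = 0" by blast
        have "(\<Sum>z\<in>S. Ht (q z) (pi z) (F z)) = - \<infinity>"
          using sum_minf[OF fin z0(1)] z0 fin2 by (simp add: Ht_def)
        then have "ereal (1 - t) * ((\<Sum>z\<in>S. Ht (q z) (pi z) (F z)) * ereal b) = - \<infinity>"
          using z0 t by simp
        moreover have "ereal t * ((\<Sum>z\<in>S. Ht (p z) (pi z) (F z)) * ereal a) \<noteq> \<infinity>"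
          using t ab fin2 sum_Pinfty[of "\<lambda>z. Ht (p z) (pi z) (F z)" S]
          by (cases "(\<Sum>z\<in>S. Ht (p z) (pi z) (F z))") (auto simp: ereal_mult_eq_PInfty)
        ultimately have Lm: "?L = - \<infinity>" by (rule minf_add2)
        show ?thesis unfolding Lm by (rule ereal_less_eq(2))
      next
        case no2: False
        have z1: "\<forall>z\<in>S. pi z = 0 \<longrightarrow> a * p z = 0 \<and> b * q z = 0"
          using no1 no2 nn ab by force
        define u1 where "u1 = t * a"
        define u2 where "u2 = (1 - t) * b"
        have u: "u1 \<ge> 0" "u2 \<ge> 0" "u1 + u2 = s" unfolding u1_def u2_def s_def using t ab by auto
        define r where "r z = (u1 * p z + u2 * q z) / (u1 + u2)" for z
        have r_eq: "(t * a / (t * a + (1 - t) * b)) * p z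
                      + (1 - t * a / (t * a + (1 - t) * b)) * q z = r z" for z
        proof -
          have sne: "t * a + (1 - t) * b \<noteq> 0" using sp unfolding s_def by simp
          have g: "1 - t * a / (t * a + (1 - t) * b) = (1 - t) * b / (t * a + (1 - t) * b)"
            using sne by (simp add: field_simps)
          show ?thesis unfolding g r_def u1_def u2_def
            by (simp add: add_divide_distrib)
        qed
        have rz: "\<forall>z\<in>S. pi z = 0 \<longrightarrow> r z = 0"
        proof (intro ballI impI)
          fix z assume "z \<in> S" "pi z = 0"
          then have "a * p z = 0" "b * q z = 0" using z1 by auto
          then have "u1 * p z = 0" "u2 * q z = 0" unfolding u1_def u2_def
            by (metis mult.assoc mult_zero_right)+
          then have "u1 * p z + u2 * q z = 0" by (metis add.right_neutral)
          then show "r z = 0" unfolding r_def by simp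
        qed
        have G1: "(\<Sum>z\<in>S. Ht (p z) (pi z) (F z)) * ereal a = ereal (a * (\<Sum>z\<in>S. Rt (p z) (pi z) (F z)))"
        proof (cases "a = 0")
          case False
          then have "\<forall>z\<in>S. pi z = 0 \<longrightarrow> p z = 0" using z1 by simp
          then show ?thesis by (simp add: sum_Ht_real mult.commute)
        qed (simp add: zero_ereal_def[symmetric])
        have G2: "(\<Sum>z\<in>S. Ht (q z) (pi z) (F z)) * ereal b = ereal (b * (\<Sum>z\<in>S. Rt (q z) (pi z) (F z)))"
        proof (cases "b = 0")
          case False
          then have "\<forall>z\<in>S. pi z = 0 \<longrightarrow> q z = 0" using z1 by simp
          then show ?thesis by (simp add: sum_Ht_real mult.commute)
        qed (simp add: zero_ereal_def[symmetric])
        have G3: "(\<Sum>z\<in>S. Ht (r z) (pi z) (F z)) = ereal (\<Sum>z\<in>S. Rt (r z) (pi z) (F z))"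
          using rz by (simp add: sum_Ht_real)
        have tm: "u1 * Rt (p z) (pi z) (F z) + u2 * Rt (q z) (pi z) (F z)
              \<le> s * Rt (r z) (pi z) (F z)" if z: "z \<in> S" for z
        proof (cases "pi z = 0")
          case True
          then have "u1 * p z = 0" "u2 * q z = 0" using z1 z unfolding u1_def u2_def by auto
          then have "u1 * Rt (p z) (pi z) (F z) = 0" "u2 * Rt (q z) (pi z) (F z) = 0"
            by (auto simp: Rt_def)
          moreover have "Rt (r z) (pi z) (F z) = 0" using True rz z by (simp add: Rt_def)
          ultimately show ?thesis by auto
        next
          case False
          then have "pi z > 0" using nn z by force
          from logsum[OF u(1,2) _ _ this, of "p z" "q z" "r z" "F z"] nn z u sp r_def
          show ?thesis unfolding Rt_def by simp
        qed
        have "t * (a * (\<Sum>z\<in>S. Rt (p z) (pi z) (F z))) + (1 - t) * (b * (\<Sum>z\<in>S. Rt (q z) (pi z) (F z)))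
            = (\<Sum>z\<in>S. u1 * Rt (p z) (pi z) (F z) + u2 * Rt (q z) (pi z) (F z))"
          unfolding u1_def u2_def by (simp add: sum.distrib sum_distrib_left mult.assoc)
        also have "\<dots> \<le> (\<Sum>z\<in>S. s * Rt (r z) (pi z) (F z))"
          using tm by (intro sum_mono) auto
        also have "\<dots> = (\<Sum>z\<in>S. Rt (r z) (pi z) (F z)) * s"
          by (simp add: sum_distrib_left mult.commute)
        finally have real: "t * (a * (\<Sum>z\<in>S. Rt (p z) (pi z) (F z))) + (1 - t) * (b * (\<Sum>z\<in>S. Rt (q z) (pi z) (F z)))
            \<le> (\<Sum>z\<in>S. Rt (r z) (pi z) (F z)) * s" .
        show ?thesis
          unfolding r_eq G1 G2 using G3 real unfolding s_def by simp
      qed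
    qed
  qed
qed

lemma pos_neg_ineq:
  fixes x1 x2 x3 :: ereal and t :: real
  assumes t: "0 < t" "t < 1" and fin: "x1 \<noteq> \<infinity>" "x2 \<noteq> \<infinity>" "x3 \<noteq> \<infinity>"
    and le: "ereal t * x1 + ereal (1 - t) * x2 \<le> x3"
  shows "ennreal t * e2ennreal x1 + ennreal (1 - t) * e2ennreal x2 + e2ennreal (- x3)
      \<le> e2ennreal x3 + ennreal t * e2ennreal (- x1) + ennreal (1 - t) * e2ennreal (- x2)"
proof (cases "x1 = - \<infinity> \<or> x2 = - \<infinity>")
  case True
  then have "ennreal t * e2ennreal (- x1) + ennreal (1 - t) * e2ennreal (- x2) = top"
    using t by (auto simp: ennreal_mult_top)
  then have R: "e2ennreal x3 + ennreal t * e2ennreal (- x1) + ennreal (1 - t) * e2ennreal (- x2) = top"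
    by (simp only: add.assoc) simp
  show ?thesis unfolding R by (rule top_greatest)
next
  case False
  then obtain r1 r2 where r: "x1 = ereal r1" "x2 = ereal r2" using fin
    by (cases x1; cases x2) auto
  have "x3 \<noteq> - \<infinity>" using le r by auto
  then obtain r3 where r3: "x3 = ereal r3" using fin by (cases x3) auto
  have lr: "t * r1 + (1 - t) * r2 \<le> r3" using le r r3 by simp
  have e: "ennreal r = ennreal (max 0 r)" for r :: real by (simp add: max_def ennreal_neg)
  define P where "P r = max 0 (r::real)" for r
  define N where "N r = max 0 (- (r::real))" for r
  have PN: "P r \<ge> 0" "N r \<ge> 0" "P r - N r = r" for r unfolding P_def N_def by auto
  have "ennreal t * ennreal (P r1) + ennreal (1 - t) * ennreal (P r2) + ennreal (N r3)
      = ennreal (t * P r1 + (1 - t) * P r2 + N r3)"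
    using t PN by (simp add: ennreal_mult ennreal_plus)
  also have "\<dots> \<le> ennreal (P r3 + t * N r1 + (1 - t) * N r2)"
  proof (rule ennreal_leI)
    have "t * (P r1 - N r1) + (1 - t) * (P r2 - N r2) \<le> P r3 - N r3" using lr PN by simp
    then show "t * P r1 + (1 - t) * P r2 + N r3 \<le> P r3 + t * N r1 + (1 - t) * N r2"
      by (simp add: algebra_simps)
  qed
  also have "\<dots> = ennreal (P r3) + ennreal t * ennreal (N r1) + ennreal (1 - t) * ennreal (N r2)"
    using t PN by (simp add: ennreal_mult ennreal_plus)
  finally show ?thesis using r r3 e unfolding P_def N_def
    by (metis e2ennreal_ereal uminus_ereal.simps(1))
qed

lemma integral_step:
  fixes M :: "'a measure" and g1 g2 g3 :: "'a \<Rightarrow> ereal" and t :: real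
  assumes meas: "g1 \<in> borel_measurable M" "g2 \<in> borel_measurable M" "g3 \<in> borel_measurable M"
    and t: "0 < t" "t < 1"
    and fin: "\<forall>x\<in>space M. g1 x \<noteq> \<infinity> \<and> g2 x \<noteq> \<infinity> \<and> g3 x \<noteq> \<infinity>"
    and le: "\<forall>x\<in>space M. ereal t * g1 x + ereal (1 - t) * g2 x \<le> g3 x"
    and A1: "(\<integral>\<^sup>+x. e2ennreal (g1 x) \<partial>M) < \<infinity>"
    and A2: "(\<integral>\<^sup>+x. e2ennreal (g2 x) \<partial>M) < \<infinity>"
    and A3: "(\<integral>\<^sup>+x. e2ennreal (g3 x) \<partial>M) < \<infinity>"
  shows "ereal t * (enn2ereal (\<integral>\<^sup>+x. e2ennreal (g1 x) \<partial>M) - enn2ereal (\<integral>\<^sup>+x. e2ennreal (- g1 x) \<partial>M))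
       + ereal (1 - t) * (enn2ereal (\<integral>\<^sup>+x. e2ennreal (g2 x) \<partial>M) - enn2ereal (\<integral>\<^sup>+x. e2ennreal (- g2 x) \<partial>M))
     \<le> enn2ereal (\<integral>\<^sup>+x. e2ennreal (g3 x) \<partial>M) - enn2ereal (\<integral>\<^sup>+x. e2ennreal (- g3 x) \<partial>M)"
proof -
  note meas[measurable]
  define P1 where "P1 = (\<integral>\<^sup>+x. e2ennreal (g1 x) \<partial>M)"
  define P2 where "P2 = (\<integral>\<^sup>+x. e2ennreal (g2 x) \<partial>M)"
  define P3 where "P3 = (\<integral>\<^sup>+x. e2ennreal (g3 x) \<partial>M)"
  define N1 where "N1 = (\<integral>\<^sup>+x. e2ennreal (- g1 x) \<partial>M)"
  define N2 where "N2 = (\<integral>\<^sup>+x. e2ennreal (- g2 x) \<partial>M)"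
  define N3 where "N3 = (\<integral>\<^sup>+x. e2ennreal (- g3 x) \<partial>M)"
  have "(\<integral>\<^sup>+x. ennreal t * e2ennreal (g1 x) + ennreal (1 - t) * e2ennreal (g2 x) + e2ennreal (- g3 x) \<partial>M)
      \<le> (\<integral>\<^sup>+x. e2ennreal (g3 x) + ennreal t * e2ennreal (- g1 x) + ennreal (1 - t) * e2ennreal (- g2 x) \<partial>M)"
    using pos_neg_ineq[OF t] fin le by (intro nn_integral_mono) auto
  moreover have "(\<integral>\<^sup>+x. ennreal t * e2ennreal (g1 x) + ennreal (1 - t) * e2ennreal (g2 x) + e2ennreal (- g3 x) \<partial>M)
      = ennreal t * P1 + ennreal (1 - t) * P2 + N3"
    unfolding P1_def P2_def N3_def
    by (subst nn_integral_add; (measurable)?; subst nn_integral_add; (measurable)?; simp add: nn_integral_cmult)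
  moreover have "(\<integral>\<^sup>+x. e2ennreal (g3 x) + ennreal t * e2ennreal (- g1 x) + ennreal (1 - t) * e2ennreal (- g2 x) \<partial>M)
      = P3 + ennreal t * N1 + ennreal (1 - t) * N2"
    unfolding P3_def N1_def N2_def
    by (subst nn_integral_add; (measurable)?; subst nn_integral_add; (measurable)?; simp add: nn_integral_cmult)
  ultimately have key: "ennreal t * P1 + ennreal (1 - t) * P2 + N3 \<le> P3 + ennreal t * N1 + ennreal (1 - t) * N2"
    by simp
  have fP: "P1 < top" "P2 < top" "P3 < top" using A1 A2 A3 unfolding P1_def P2_def P3_def by auto
  then obtain p1 p2 p3 where p: "P1 = ennreal p1" "P2 = ennreal p2" "P3 = ennreal p3"
    "p1 \<ge> 0" "p2 \<ge> 0" "p3 \<ge> 0"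
    by (metis ennreal_cases less_irrefl)
  have final: "ereal t * (enn2ereal P1 - enn2ereal N1) + ereal (1 - t) * (enn2ereal P2 - enn2ereal N2)
     \<le> enn2ereal P3 - enn2ereal N3"
  proof (cases "N1 = top \<or> N2 = top")
    case True
    have "ereal t * (enn2ereal P1 - enn2ereal N1) + ereal (1 - t) * (enn2ereal P2 - enn2ereal N2) = - \<infinity>"
    proof (cases "N1 = top")
      case True
      then have "ereal t * (enn2ereal P1 - enn2ereal N1) = - \<infinity>" using p t by simp
      moreover have "ereal (1 - t) * (enn2ereal P2 - enn2ereal N2) \<noteq> \<infinity>"
        using p t by (cases N2 rule: ennreal_cases) (auto simp: ereal_mult_eq_PInfty)
      ultimately show ?thesis by (rule minf_add1)
    next
      case False
      then have N2: "N2 = top" using \<open>N1 = top \<or> N2 = top\<close> by simp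
      then have "ereal (1 - t) * (enn2ereal P2 - enn2ereal N2) = - \<infinity>" using p t by simp
      moreover have "ereal t * (enn2ereal P1 - enn2ereal N1) \<noteq> \<infinity>"
        using p t by (cases N1 rule: ennreal_cases) (auto simp: ereal_mult_eq_PInfty)
      ultimately show ?thesis by (rule minf_add2)
    qed
    then show ?thesis by (simp only:) (rule ereal_less_eq(2))
  next
    case False
    then obtain n1 n2 where n: "N1 = ennreal n1" "N2 = ennreal n2" "n1 \<ge> 0" "n2 \<ge> 0"
      by (metis ennreal_cases)
    have "N3 \<le> ennreal t * P1 + ennreal (1 - t) * P2 + N3"
      by (rule add_increasing) simp_all
    then have "N3 \<le> P3 + ennreal t * N1 + ennreal (1 - t) * N2" using key
      by (rule order_trans)
    moreover have "P3 + ennreal t * N1 + ennreal (1 - t) * N2 < top"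
      using p n by (simp add: ennreal_mult_less_top)
    ultimately have "N3 < top" by (rule le_less_trans)
    then obtain n3 where n3: "N3 = ennreal n3" "n3 \<ge> 0" by (metis ennreal_cases less_irrefl)
    have e1: "ennreal t * P1 + ennreal (1 - t) * P2 + N3 = ennreal (t * p1 + (1 - t) * p2 + n3)"
      using p n3 t by (simp add: ennreal_mult)
    have e2: "P3 + ennreal t * N1 + ennreal (1 - t) * N2 = ennreal (p3 + t * n1 + (1 - t) * n2)"
      using p n t by (simp add: ennreal_mult)
    have "ennreal (t * p1 + (1 - t) * p2 + n3) \<le> ennreal (p3 + t * n1 + (1 - t) * n2)"
      using key unfolding e1 e2 .
    then have "t * p1 + (1 - t) * p2 + n3 \<le> p3 + t * n1 + (1 - t) * n2"
      using p n t by (subst (asm) ennreal_le_iff) auto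
    then show ?thesis using p n n3 by (simp add: algebra_simps)
  qed
  then show ?thesis unfolding P1_def P2_def P3_def N1_def N2_def N3_def .
qed

lemma Ht_meas[measurable]:
  assumes [measurable]: "a \<in> borel_measurable M" "b \<in> borel_measurable M" "c \<in> borel_measurable M"
  shows "(\<lambda>x. Ht (a x) (b x) (c x)) \<in> borel_measurable M"
  unfolding Ht_def by measurable

lemma Ht_le:
  assumes "0 \<le> k" "k \<le> 1" "0 \<le> p" "p \<le> 1" "\<bar>F\<bar> \<le> C"
  shows "Ht k p F \<le> ereal (C + 1)"
proof -
  have C0: "C \<ge> 0" using assms(5) by simp
  show ?thesis
  proof (cases "k = 0 \<or> p = 0")
    case True then show ?thesis using C0 by (auto simp: Ht_def)
  next
    case False
    then have kp: "k > 0" "p > 0" using assms by auto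
    have "ln (1 / k) \<le> 1 / k - 1" using kp by (intro ln_le_minus_one) simp
    then have l1: "- ln k \<le> 1 / k - 1" using kp by (simp add: ln_div)
    have "k * (- ln k) \<le> k * (1 / k - 1)" using l1 kp by (intro mult_left_mono) auto
    moreover have "k * (1 / k - 1) = 1 - k" using kp by (simp add: right_diff_distrib)
    ultimately have l2: "- (k * ln k) \<le> 1 - k" by simp
    have l3: "ln p \<le> 0" using kp assms by simp
    have "k * F \<le> k * \<bar>F\<bar>" using kp by (intro mult_left_mono) auto
    also have "\<dots> \<le> 1 * C" using assms by (intro mult_mono) auto
    finally have l4: "k * F \<le> C" by simp
    have "k * (F - ln (k / p)) = k * F - k * ln k + k * ln p" using kp
      by (simp add: ln_div algebra_simps)
    also have "\<dots> \<le> C + 1" using l2 l4 mult_left_mono[OF l3, of k] kp by simp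
    finally show ?thesis using False by (simp add: Ht_def)
  qed
qed

lemma g_bound:
  assumes "finite S" "\<forall>z\<in>S. 0 \<le> k z \<and> k z \<le> 1 \<and> 0 \<le> p z \<and> p z \<le> 1 \<and> \<bar>F z\<bar> \<le> C"
    and "0 \<le> phi"
  shows "(\<Sum>z\<in>S. Ht (k z) (p z) (F z)) * ereal phi \<le> ereal (real (card S) * (C + 1) * phi)"
proof -
  have "(\<Sum>z\<in>S. Ht (k z) (p z) (F z)) \<le> (\<Sum>z\<in>S. ereal (C + 1))"
    using assms Ht_le by (intro sum_mono) auto
  also have "\<dots> = ereal (real (card S) * (C + 1))" by simp
  finally have "(\<Sum>z\<in>S. Ht (k z) (p z) (F z)) * ereal phi \<le> ereal (real (card S) * (C + 1)) * ereal phi"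
    using assms(3) by (intro ereal_mult_right_mono) auto
  then show ?thesis by simp
qed

lemma g_not_inf:
  assumes "0 \<le> phi"
  shows "(\<Sum>z\<in>S. Ht (k z) (p z) (F z)) * ereal phi \<noteq> \<infinity>"
proof -
  have "(\<Sum>z\<in>S. Ht (k z) (p z) (F z)) \<noteq> \<infinity>" by (simp add: sum_Pinfty Ht_not_inf)
  then show ?thesis using assms
    by (cases "(\<Sum>z\<in>S. Ht (k z) (p z) (F z))") (auto simp: ereal_mult_eq_PInfty)
qed

lemma mix_id:
  fixes a b t p q :: real
  assumes "0 \<le> a" "0 \<le> b" "0 < t" "t < 1"
  shows "(t * a + (1 - t) * b) * ((t * a / (t * a + (1 - t) * b)) * p
           + (1 - t * a / (t * a + (1 - t) * b)) * q) = t * (a * p) + (1 - t) * (b * q)"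
proof (cases "t * a + (1 - t) * b = 0")
  case True
  have "t * a \<ge> 0" "(1 - t) * b \<ge> 0" using assms by auto
  then have "t * a = 0" "(1 - t) * b = 0" using True by linarith+
  then have "a = 0" "b = 0" using assms by auto
  then show ?thesis by simp
next
  case False
  define s where "s = t * a + (1 - t) * b"
  have sn: "s \<noteq> 0" using False unfolding s_def .
  have "1 - t * a / s = s / s - t * a / s" using sn by simp
  also have "\<dots> = (s - t * a) / s" by (simp add: diff_divide_distrib)
  also have "s - t * a = (1 - t) * b" unfolding s_def by simp
  finally have g: "1 - t * a / s = (1 - t) * b / s" .
  have "s * (t * a / s * p + (1 - t) * b / s * q) = (s * (t * a / s)) * p + (s * ((1 - t) * b / s)) * q"
    by (simp add: algebra_simps)
  also have "\<dots> = t * (a * p) + (1 - t) * (b * q)" using sn by simp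
  finally show ?thesis unfolding s_def[symmetric] g .
qed

lemma mix_range:
  fixes a b t p q :: real
  assumes "0 \<le> a" "0 \<le> b" "0 < t" "t < 1" "0 \<le> p" "p \<le> 1" "0 \<le> q" "q \<le> 1"
  shows "0 \<le> (t * a / (t * a + (1 - t) * b)) * p + (1 - t * a / (t * a + (1 - t) * b)) * q
     \<and> (t * a / (t * a + (1 - t) * b)) * p + (1 - t * a / (t * a + (1 - t) * b)) * q \<le> 1"
proof -
  define g where "g = t * a / (t * a + (1 - t) * b)"
  have n1: "t * a \<ge> 0" "(1 - t) * b \<ge> 0" using assms by auto
  have g0: "0 \<le> g" unfolding g_def using n1 by (intro divide_nonneg_nonneg) auto
  have g1: "g \<le> 1"
  proof (cases "t * a + (1 - t) * b = 0")
    case True then show ?thesis unfolding g_def by simp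
  next
    case False
    then have "t * a + (1 - t) * b > 0" using n1 by linarith
    then show ?thesis unfolding g_def using n1 by (simp add: divide_le_eq_1)
  qed
  have "0 \<le> g * p" "0 \<le> (1 - g) * q" using g0 g1 assms by auto
  moreover have "g * p \<le> g * 1" using g0 assms by (intro mult_left_mono) auto
  moreover have "(1 - g) * q \<le> (1 - g) * 1" using g1 assms by (intro mult_left_mono) auto
  ultimately have "0 \<le> g * p + (1 - g) * q \<and> g * p + (1 - g) * q \<le> 1" by simp
  then show ?thesis unfolding g_def .
qed

lemma eval_meas:
  "(\<lambda>\<omega>::('d::finite) env. \<omega> x z) \<in> borel_measurable (restrict_space borel A)"
proof -
  have "continuous_on UNIV (\<lambda>\<omega>::('d::finite) env. \<omega> x z)"
    by (intro continuous_on_compose2[OF continuous_on_product_coordinates[where i=z] continuous_on_product_coordinates[where i=x]]) auto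
  then have "continuous_on A (\<lambda>\<omega>::('d::finite) env. \<omega> x z)" by (rule continuous_on_subset) auto
  then show ?thesis by (rule borel_measurable_continuous_on_restrict)
qed

lemma A_fin:
  fixes g :: "'a \<Rightarrow> ereal"
  assumes "integrable M phi" "AE x in M. g x \<le> ereal (C * phi x)" "0 \<le> C"
  shows "(\<integral>\<^sup>+x. e2ennreal (g x) \<partial>M) < \<infinity>"
proof -
  have "AE x in M. e2ennreal (g x) \<le> ennreal (C * phi x)"
    using assms(2) by eventually_elim (metis e2ennreal_ereal e2ennreal_mono)
  then have "(\<integral>\<^sup>+x. e2ennreal (g x) \<partial>M) \<le> (\<integral>\<^sup>+x. ennreal (C * phi x) \<partial>M)"
    by (rule nn_integral_mono_AE)
  also have "\<dots> < \<infinity>"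
  proof -
    have "integrable M (\<lambda>x. C * phi x)" using assms(1) by simp
    then have "(\<integral>\<^sup>+x. ennreal (C * phi x) \<partial>M) \<noteq> \<infinity>" by (rule integrableD(2))
    then show ?thesis unfolding infinity_ennreal_def by (simp add: less_top[symmetric])
  qed
  finally show ?thesis .
qed

lemma H_integrand_Ht:
  "H_integrand B \<omega> f k \<phi> = (\<Sum>z\<in>steps B. Ht (k \<omega> z) (\<omega> 0 z) (f \<omega> z)) * ereal (\<phi> \<omega>)"
  by (simp add: H_integrand_def H_term_def Ht_def)

theorem lemma2p2:
  fixes B :: nat and P :: "('d::finite) env measure"
    and f k1 k2 :: "'d env \<Rightarrow> int ^ 'd \<Rightarrow> real"
    and \<phi>1 \<phi>2 :: "'d env \<Rightarrow> real" and t :: real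
  assumes "B \<ge> 1"
    and "standing_env B P"
    and "Cb B f"
    and "0 < t" and "t < 1"
    and "env_kernel B P k1" and "prob_density P \<phi>1" and "kernel_invariant B P k1 \<phi>1"
    and "env_kernel B P k2" and "prob_density P \<phi>2" and "kernel_invariant B P k2 \<phi>2"
  shows "kernel_invariant B P
           (\<lambda>\<omega> z. (t * \<phi>1 \<omega> / (t * \<phi>1 \<omega> + (1 - t) * \<phi>2 \<omega>)) * k1 \<omega> z
                 + (1 - t * \<phi>1 \<omega> / (t * \<phi>1 \<omega> + (1 - t) * \<phi>2 \<omega>)) * k2 \<omega> z)
           (\<lambda>\<omega>. t * \<phi>1 \<omega> + (1 - t) * \<phi>2 \<omega>)
       \<and> H_f B P f
           (\<lambda>\<omega> z. (t * \<phi>1 \<omega> / (t * \<phi>1 \<omega> + (1 - t) * \<phi>2 \<omega>)) * k1 \<omega> z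
                 + (1 - t * \<phi>1 \<omega> / (t * \<phi>1 \<omega> + (1 - t) * \<phi>2 \<omega>)) * k2 \<omega> z)
           (\<lambda>\<omega>. t * \<phi>1 \<omega> + (1 - t) * \<phi>2 \<omega>)
         \<ge> ereal t * H_f B P f k1 \<phi>1 + ereal (1 - t) * H_f B P f k2 \<phi>2"
proof -
  define k3 where "k3 = (\<lambda>\<omega> z. (t * \<phi>1 \<omega> / (t * \<phi>1 \<omega> + (1 - t) * \<phi>2 \<omega>)) * k1 \<omega> z
                 + (1 - t * \<phi>1 \<omega> / (t * \<phi>1 \<omega> + (1 - t) * \<phi>2 \<omega>)) * k2 \<omega> z)"
  define \<phi>3 where "\<phi>3 = (\<lambda>\<omega>. t * \<phi>1 \<omega> + (1 - t) * \<phi>2 \<omega>)"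
  have t: "0 < t" "t < 1" using assms(4,5) .
  from assms(2) have prob: "prob_space P" and sp: "space P = env_space B"
    and sets: "sets P = sets (restrict_space borel (env_space B))"
    and shm: "\<And>z. shift z \<in> P \<rightarrow>\<^sub>M P"
    unfolding standing_env_def by auto
  interpret prob_space P by (rule prob)
  obtain \<omega>0 where "\<omega>0 \<in> space P" using not_empty by auto
  then have s1: "(\<Sum>z\<in>steps B. \<omega>0 0 z) = 1" using sp unfolding env_space_def by auto
  have fin: "finite (steps B :: (int ^ 'd) set)"
  proof (rule ccontr)
    assume "infinite (steps B :: (int ^ 'd) set)"
    then have "(\<Sum>z\<in>steps B. \<omega>0 0 z) = 0" by simp
    with s1 show False by simp
  qed
  have env: "0 \<le> \<omega> x z \<and> \<omega> x z \<le> 1" if "\<omega> \<in> space P" "z \<in> steps B" for \<omega> x z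
  proof -
    have a: "\<forall>z\<in>steps B. 0 \<le> \<omega> x z" "(\<Sum>z\<in>steps B. \<omega> x z) = 1"
      using that sp unfolding env_space_def by auto
    have "\<omega> x z \<le> (\<Sum>z\<in>steps B. \<omega> x z)" using a fin that by (intro member_le_sum) auto
    then show ?thesis using a that by auto
  qed
  have shsp: "shift z \<omega> \<in> space P" if "\<omega> \<in> space P" for z \<omega>
    using shm[of z] that by (rule measurable_space)
  from assms(6) have k1m: "\<And>z. z \<in> steps B \<Longrightarrow> (\<lambda>\<omega>. k1 \<omega> z) \<in> borel_measurable P"
    and k1n: "\<And>\<omega> z. \<omega> \<in> space P \<Longrightarrow> z \<in> steps B \<Longrightarrow> 0 \<le> k1 \<omega> z"
    and k1s: "AE \<omega> in P. (\<Sum>z\<in>steps B. k1 \<omega> z) = 1"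
    unfolding env_kernel_def by auto
  from assms(9) have k2m: "\<And>z. z \<in> steps B \<Longrightarrow> (\<lambda>\<omega>. k2 \<omega> z) \<in> borel_measurable P"
    and k2n: "\<And>\<omega> z. \<omega> \<in> space P \<Longrightarrow> z \<in> steps B \<Longrightarrow> 0 \<le> k2 \<omega> z"
    and k2s: "AE \<omega> in P. (\<Sum>z\<in>steps B. k2 \<omega> z) = 1"
    unfolding env_kernel_def by auto
  from assms(7) have p1m: "\<phi>1 \<in> borel_measurable P" and p1n: "\<And>\<omega>. \<omega> \<in> space P \<Longrightarrow> 0 \<le> \<phi>1 \<omega>"
    and p1i: "integrable P \<phi>1" unfolding prob_density_def by auto
  from assms(10) have p2m: "\<phi>2 \<in> borel_measurable P" and p2n: "\<And>\<omega>. \<omega> \<in> space P \<Longrightarrow> 0 \<le> \<phi>2 \<omega>"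
    and p2i: "integrable P \<phi>2" unfolding prob_density_def by auto
  have p3n: "0 \<le> \<phi>3 \<omega>" if "\<omega> \<in> space P" for \<omega>
    unfolding \<phi>3_def using p1n[OF that] p2n[OF that] t by simp
  have p3i: "integrable P \<phi>3" unfolding \<phi>3_def using p1i p2i by simp

  have inv: "kernel_invariant B P k3 \<phi>3"
    unfolding kernel_invariant_def
    using AE_space assms(8,11)[unfolded kernel_invariant_def]
  proof eventually_elim
    case (elim \<omega>)
    have "(\<Sum>z\<in>steps B. \<phi>3 (shift (- z) \<omega>) * k3 (shift (- z) \<omega>) z)
       = (\<Sum>z\<in>steps B. t * (\<phi>1 (shift (- z) \<omega>) * k1 (shift (- z) \<omega>) z)
                      + (1 - t) * (\<phi>2 (shift (- z) \<omega>) * k2 (shift (- z) \<omega>) z))"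
    proof (rule sum.cong)
      fix z :: "int ^ 'd" assume "z \<in> steps B"
      have "shift (- z) \<omega> \<in> space P" using elim(1) by (rule shsp)
      then show "\<phi>3 (shift (- z) \<omega>) * k3 (shift (- z) \<omega>) z
         = t * (\<phi>1 (shift (- z) \<omega>) * k1 (shift (- z) \<omega>) z)
                      + (1 - t) * (\<phi>2 (shift (- z) \<omega>) * k2 (shift (- z) \<omega>) z)"
        unfolding \<phi>3_def k3_def using p1n p2n t by (intro mix_id) auto
    qed simp
    also have "\<dots> = t * \<phi>1 \<omega> + (1 - t) * \<phi>2 \<omega>"
      using elim(2,3) by (simp add: sum.distrib sum_distrib_left)
    finally show ?case unfolding \<phi>3_def by simp
  qed

  have mcong: "borel_measurable P = borel_measurable (restrict_space borel (env_space B))"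
    using sets by (intro measurable_cong_sets) auto
  have evm: "(\<lambda>\<omega>. \<omega> 0 z) \<in> borel_measurable P" for z
    unfolding mcong by (rule eval_meas)
  from assms(3) obtain C where fc: "\<And>z. z \<in> steps B \<Longrightarrow> continuous_on (env_space B) (\<lambda>\<omega>. f \<omega> z)"
    and fC: "\<And>\<omega> z. \<omega> \<in> env_space B \<Longrightarrow> z \<in> steps B \<Longrightarrow> \<bar>f \<omega> z\<bar> \<le> C"
    unfolding Cb_def by auto
  have fm: "(\<lambda>\<omega>. f \<omega> z) \<in> borel_measurable P" if "z \<in> steps B" for z
    unfolding mcong using fc[OF that] by (rule borel_measurable_continuous_on_restrict)
  have k3m: "(\<lambda>\<omega>. k3 \<omega> z) \<in> borel_measurable P" if "z \<in> steps B" for z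
    using k1m[OF that] k2m[OF that] p1m p2m unfolding k3_def by measurable
  have gm: "(\<lambda>\<omega>. (\<Sum>z\<in>steps B. Ht (k \<omega> z) (\<omega> 0 z) (f \<omega> z)) * ereal (\<phi> \<omega>)) \<in> borel_measurable P"
    if km: "\<And>z. z \<in> steps B \<Longrightarrow> (\<lambda>\<omega>. k \<omega> z) \<in> borel_measurable P" and pm: "\<phi> \<in> borel_measurable P"
    for k \<phi>
  proof -
    have [measurable]: "(\<lambda>\<omega>. \<Sum>z\<in>steps B. Ht (k \<omega> z) (\<omega> 0 z) (f \<omega> z)) \<in> borel_measurable P"
      by (rule borel_measurable_ereal_sum, rule Ht_meas) (auto intro: km fm evm)
    show ?thesis using pm by measurable
  qed

  let ?g1 = "\<lambda>\<omega>. H_integrand B \<omega> f k1 \<phi>1"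
  let ?g2 = "\<lambda>\<omega>. H_integrand B \<omega> f k2 \<phi>2"
  let ?g3 = "\<lambda>\<omega>. H_integrand B \<omega> f k3 \<phi>3"
  have k3r: "0 \<le> k3 \<omega> z \<and> k3 \<omega> z \<le> 1" if "\<omega> \<in> space P" "z \<in> steps B"
    "0 \<le> k1 \<omega> z" "k1 \<omega> z \<le> 1" "0 \<le> k2 \<omega> z" "k2 \<omega> z \<le> 1" for \<omega> z
    unfolding k3_def using that p1n p2n t by (intro mix_range) auto
  have AEk: "AE \<omega> in P. \<forall>z\<in>steps B. k1 \<omega> z \<le> 1 \<and> k2 \<omega> z \<le> 1"
    using AE_space k1s k2s
  proof eventually_elim
    case (elim \<omega>)
    show ?case
    proof
      fix z :: "int ^ 'd" assume z: "z \<in> steps B"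
      have "k1 \<omega> z \<le> (\<Sum>z\<in>steps B. k1 \<omega> z)" "k2 \<omega> z \<le> (\<Sum>z\<in>steps B. k2 \<omega> z)"
        using fin z k1n k2n elim(1) by (auto intro!: member_le_sum)
      then show "k1 \<omega> z \<le> 1 \<and> k2 \<omega> z \<le> 1" using elim by simp
    qed
  qed
  define M where "M = real (card (steps B :: (int ^ 'd) set)) * (\<bar>C\<bar> + 1)"
  have M0: "M \<ge> 0" unfolding M_def by simp
  have bound: "(\<Sum>z\<in>steps B. Ht (k \<omega> z) (\<omega> 0 z) (f \<omega> z)) * ereal (\<phi> \<omega>) \<le> ereal (M * \<phi> \<omega>)"
    if "\<omega> \<in> space P" "\<forall>z\<in>steps B. 0 \<le> k \<omega> z \<and> k \<omega> z \<le> 1" "0 \<le> \<phi> \<omega>" for k \<phi> \<omega>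
  proof -
    have "\<forall>z\<in>steps B. 0 \<le> k \<omega> z \<and> k \<omega> z \<le> 1 \<and> 0 \<le> \<omega> 0 z \<and> \<omega> 0 z \<le> 1 \<and> \<bar>f \<omega> z\<bar> \<le> \<bar>C\<bar>"
      using that env fC sp by (auto intro: order_trans[OF _ abs_ge_self])
    from g_bound[OF fin this that(3)] show ?thesis unfolding M_def by (simp add: mult.assoc)
  qed
  have H: "ereal t * H_f B P f k1 \<phi>1 + ereal (1 - t) * H_f B P f k2 \<phi>2 \<le> H_f B P f k3 \<phi>3"
    unfolding H_f_def
  proof (rule integral_step[OF _ _ _ t])
    show "?g1 \<in> borel_measurable P" unfolding H_integrand_Ht using k1m p1m by (rule gm)
    show "?g2 \<in> borel_measurable P" unfolding H_integrand_Ht using k2m p2m by (rule gm)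
    have p3m: "\<phi>3 \<in> borel_measurable P" unfolding \<phi>3_def using p1m p2m by measurable
    show "?g3 \<in> borel_measurable P" unfolding H_integrand_Ht using k3m p3m by (rule gm)
    show "\<forall>x\<in>space P. ?g1 x \<noteq> \<infinity> \<and> ?g2 x \<noteq> \<infinity> \<and> ?g3 x \<noteq> \<infinity>"
    proof (intro ballI conjI)
      fix x assume x: "x \<in> space P"
      show "?g1 x \<noteq> \<infinity>" unfolding H_integrand_Ht by (rule g_not_inf, rule p1n[OF x])
      show "?g2 x \<noteq> \<infinity>" unfolding H_integrand_Ht by (rule g_not_inf, rule p2n[OF x])
      show "?g3 x \<noteq> \<infinity>" unfolding H_integrand_Ht by (rule g_not_inf, rule p3n[OF x])
    qed
    show "\<forall>x\<in>space P. ereal t * ?g1 x + ereal (1 - t) * ?g2 x \<le> ?g3 x"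
    proof
      fix \<omega> assume w: "\<omega> \<in> space P"
      show "ereal t * ?g1 \<omega> + ereal (1 - t) * ?g2 \<omega> \<le> ?g3 \<omega>"
        unfolding H_integrand_Ht k3_def \<phi>3_def
        using w k1n k2n env p1n p2n by (intro pointwise[OF fin t]) auto
    qed
    have "AE \<omega> in P. ?g1 \<omega> \<le> ereal (M * \<phi>1 \<omega>)" using AEk AE_space
    proof eventually_elim
      case (elim \<omega>) show ?case unfolding H_integrand_Ht using elim k1n p1n by (intro bound) auto
    qed
    then show "(\<integral>\<^sup>+x. e2ennreal (?g1 x) \<partial>P) < \<infinity>" by (rule A_fin[OF p1i _ M0])
    have "AE \<omega> in P. ?g2 \<omega> \<le> ereal (M * \<phi>2 \<omega>)" using AEk AE_space
    proof eventually_elim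
      case (elim \<omega>) show ?case unfolding H_integrand_Ht using elim k2n p2n by (intro bound) auto
    qed
    then show "(\<integral>\<^sup>+x. e2ennreal (?g2 x) \<partial>P) < \<infinity>" by (rule A_fin[OF p2i _ M0])
    have "AE \<omega> in P. ?g3 \<omega> \<le> ereal (M * \<phi>3 \<omega>)" using AEk AE_space
    proof eventually_elim
      case (elim \<omega>) show ?case unfolding H_integrand_Ht using elim k1n k2n k3r p3n by (intro bound) auto
    qed
    then show "(\<integral>\<^sup>+x. e2ennreal (?g3 x) \<partial>P) < \<infinity>" by (rule A_fin[OF p3i _ M0])
  qed
  show ?thesis using inv H unfolding k3_def \<phi>3_def by simp
qed

end
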